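(* For any $\alpha\in(0,1/2)$ and any (possibly $K$-dependent) integer $t$ with $0\le t\le K^{1+\alpha}$, \[ \frac{C_t-\widetilde C_t}{K}\to0\quad\text{in probability as }K\to\infty. \]
   Context: Incremental construction. Fix an integer $K\ge2$, $[n]=\{1,\dots,n\}$. A random $K\times K$ matrix $\Psi$ is filled with $1,\dots,K^2$, the integer $s$ placed at step $s$. After step $t$, $R_t$, $C_t$ are the numbers of nonempty rows and columns (nonempty rows are $1,\dots,R_t$, nonempty columns $1,\dots,C_t$), and $M_t$ is the submatrix with rows $[R_t]$, columns $[C_t]$; $R_0=C_0=0$. Step 1: $\Psi(1,1)=1$ ($R_1=C_1=1$), counted as creating a new row and a new column. For $t=1,\dots,K^2-1$, step $t+1$: with conditional probability $\rho_{t+1}=\frac{(K-R_t)K}{K^2-t}$ a new row is created ($R_{t+1}=R_t+1$), and independently with probability $\frac{K-C_t}{K}$ also a new column ($C_{t+1}=C_t+1$, $\Psi(R_{t+1},C_{t+1})=t+1$), otherwise $C_{t+1}=C_t$ and $\Psi(R_{t+1},Z)=t+1$ with $Z$ uniform in $[C_t]$. With probability $1-\rho_{t+1}$, no new row is created ($R_{t+1}=R_t$) and a uniformly random empty cell $(X,Y)$ among rows $[R_t]$ is chosen by rejection sampling: cells are drawn independently and uniformly among the $R_tK$ cells of rows $[R_t]$ until an empty one is drawn; $U_{t+1}=1$ if the first draw is empty, $U_{t+1}=0$ otherwise. If $Y>C_t$ then $C_{t+1}=C_t+1$ and $\Psi(X,C_{t+1})=t+1$; otherwise $C_{t+1}=C_t$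 and $\Psi(X,Y)=t+1$. Define $\widetilde C_0=0$ and, for $s\ge1$: $\widetilde C_s-\widetilde C_{s-1}=C_s-C_{s-1}$, except at steps $s$ where no new row is created and $U_s=0$, where $\widetilde C_s=\widetilde C_{s-1}$. *)

theory Defs
  imports "HOL-Probability.Probability"
begin

text \<open>State after step t: (R_t, C_t, Ctilde_t, Psi), where Psi (i,j) is the entry of
  cell (i,j) (rows/columns indexed from 1), and 0 means the cell is empty.\<close>

type_synonym mstate = "nat \<times> nat \<times> nat \<times> (nat \<times> nat \<Rightarrow> nat)"

definition st_R :: "mstate \<Rightarrow> nat" where "st_R s = fst s"
definition st_C :: "mstate \<Rightarrow> nat" where "st_C s = fst (snd s)"
definition st_Ct :: "mstate \<Rightarrow> nat" where "st_Ct s = fst (snd (snd s))"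
definition st_Psi :: "mstate \<Rightarrow> (nat \<times> nat \<Rightarrow> nat)" where "st_Psi s = snd (snd (snd s))"

text \<open>The first draw is uniform over all R*K cells; if it is empty it is accepted (U = True),
  otherwise the accepted cell is the first empty cell among further i.i.d. uniform draws,
  which is uniform over the empty cells (U = False).\<close>

definition rejection_sample :: "nat \<Rightarrow> nat \<Rightarrow> (nat \<times> nat \<Rightarrow> nat) \<Rightarrow> (bool \<times> (nat \<times> nat)) pmf" where
  "rejection_sample K R Psi =
     bind_pmf (pmf_of_set ({1..R} \<times> {1..K})) (\<lambda>d.
       if Psi d = 0 then return_pmf (True, d)
       else map_pmf (\<lambda>c. (False, c)) (pmf_of_set {c \<in> {1..R} \<times> {1..K}. Psi c = 0}))"

definition step :: "nat \<Rightarrow> nat \<Rightarrow> mstate \<Rightarrow> mstate pmf" where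
  "step K t s =
    (let R = st_R s; C = st_C s; Ct = st_Ct s; Psi = st_Psi s in
     if t = 0 then return_pmf (1, 1, 1, Psi((1,1) := 1))
     else if K^2 \<le> t then return_pmf s
     else bind_pmf (bernoulli_pmf (real ((K - R) * K) / real (K^2 - t))) (\<lambda>newrow.
       if newrow then
         bind_pmf (bernoulli_pmf (real (K - C) / real K)) (\<lambda>newcol.
           if newcol then return_pmf (R + 1, C + 1, Ct + 1, Psi((R + 1, C + 1) := t + 1))
           else map_pmf (\<lambda>z. (R + 1, C, Ct, Psi((R + 1, z) := t + 1))) (pmf_of_set {1..C}))
       else
         map_pmf (\<lambda>(U, (x, y)).
            if C < y then (R, C + 1, (if U then Ct + 1 else Ct), Psi((x, C + 1) := t + 1))
            else (R, C, Ct, Psi((x, y) := t + 1)))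
           (rejection_sample K R Psi)))"

fun proc :: "nat \<Rightarrow> nat \<Rightarrow> mstate pmf" where
  "proc K 0 = return_pmf (0, 0, 0, (\<lambda>_. 0))"
| "proc K (Suc t) = bind_pmf (proc K t) (step K t)"

end

theory Submission
  imports Defs
begin


definition minv :: "nat \<Rightarrow> mstate \<Rightarrow> bool" where
  "minv t s \<longleftrightarrow> finite {d. st_Psi s d \<noteq> 0} \<and> card {d. st_Psi s d \<noteq> 0} \<le> t \<and> st_Ct s \<le> st_C s"

lemma upd_card:
  assumes "finite {d. P d \<noteq> (0::nat)}" "card {d. P d \<noteq> 0} \<le> t"
  shows "finite {d. (P(a:=v)) d \<noteq> 0} \<and> card {d. (P(a:=v)) d \<noteq> 0} \<le> Suc t"
proof -
  have sub: "{d. (P(a:=v)) d \<noteq> 0} \<subseteq> insert a {d. P d \<noteq> 0}" by auto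
  have "finite (insert a {d. P d \<noteq> 0})" using assms by simp
  moreover have "card (insert a {d. P d \<noteq> 0}) \<le> Suc t"
    using assms card_insert_le_m1 by (simp add: card_insert_if)
  ultimately show ?thesis using sub card_mono finite_subset by (meson order_trans)
qed

lemma inv_upd:
  assumes "minv t (R, C, Ct, Psi)" "Ct' \<le> C'"
  shows "minv (Suc t) (R', C', Ct', Psi(a:=v))"
  using assms upd_card[of Psi t a v] unfolding minv_def st_Psi_def st_C_def st_Ct_def by simp

lemma inv_step:
  assumes "minv t s" "x \<in> set_pmf (step K t s)"
  shows "minv (Suc t) x"
proof -
  obtain R C Ct Psi where s: "s = (R, C, Ct, Psi)" by (cases s) auto
  have i: "minv t (R, C, Ct, Psi)" using assms s by simp
  have ic: "Ct \<le> C" using i by (simp add: minv_def st_C_def st_Ct_def)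
  show ?thesis
  proof (cases "t = 0")
    case True
    then show ?thesis using assms(2) s inv_upd[OF i, of 1 1] unfolding step_def
      by (simp add: st_R_def st_C_def st_Ct_def st_Psi_def)
  next
    case t0: False
    show ?thesis
    proof (cases "K^2 \<le> t")
      case True
      then show ?thesis using assms t0 unfolding step_def minv_def
        by (auto simp: Let_def)
    next
      case False
      from assms(2) t0 False show ?thesis unfolding s step_def
        by (auto simp: Let_def st_R_def st_C_def st_Ct_def st_Psi_def ic
              intro!: inv_upd[OF i] le_SucI[OF ic] split: if_splits prod.splits)
    qed
  qed
qed

lemma inv_proc: "x \<in> set_pmf (proc K t) \<Longrightarrow> minv t x"
proof (induction t arbitrary: x)
  case 0
  then show ?case by (simp add: minv_def st_Psi_def st_C_def st_Ct_def)
next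
  case (Suc t)
  from Suc.prems obtain y where "y \<in> set_pmf (proc K t)" "x \<in> set_pmf (step K t y)" by auto
  then show ?case using Suc.IH inv_step by blast
qed



definition F :: "mstate \<Rightarrow> ennreal" where "F s = ennreal (real (st_C s - st_Ct s))"

lemma int_const_pmf: "(\<And>x. f x = c) \<Longrightarrow> (\<integral>\<^sup>+x. f x \<partial>measure_pmf M) = c"
  by (simp add: measure_pmf.emeasure_space_1)

lemma rs_bound:
  assumes "finite {d. Psi d \<noteq> 0}" "card {d. Psi d \<noteq> (0::nat)} \<le> t" "R > 0" "K > 0"
  shows "(\<integral>\<^sup>+w. (if fst w then 0 else 1) \<partial>rejection_sample K R Psi) \<le> ennreal (real t / (real R * real K))"
proof -
  define S where "S = {1..R} \<times> {1..K}"
  have fS: "finite S" "S \<noteq> {}" using assms by (auto simp: S_def)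
  have cS: "card S = R * K" by (simp add: S_def)
  have "(\<integral>\<^sup>+w. (if fst w then 0 else 1) \<partial>rejection_sample K R Psi)
      = (\<integral>\<^sup>+d. indicator {d. Psi d \<noteq> 0} d \<partial>pmf_of_set S)"
    unfolding rejection_sample_def S_def[symmetric]
    by (auto intro!: nn_integral_cong simp: measure_pmf.emeasure_space_1 indicator_def)
  also have "\<dots> = emeasure (measure_pmf (pmf_of_set S)) {d. Psi d \<noteq> 0}"
    by simp
  also have "\<dots> = ennreal (real (card (S \<inter> {d. Psi d \<noteq> 0})) / real (card S))"
    using fS by (simp add: emeasure_pmf_of_set)
  also have "\<dots> \<le> ennreal (real t / (real R * real K))"
  proof (rule ennreal_leI)
    have "card (S \<inter> {d. Psi d \<noteq> 0}) \<le> card {d. Psi d \<noteq> 0}"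
      using assms(1) by (intro card_mono) auto
    then have "real (card (S \<inter> {d. Psi d \<noteq> 0})) \<le> real t" using assms(2) by linarith
    then show "real (card (S \<inter> {d. Psi d \<noteq> 0})) / real (card S) \<le> real t / (real R * real K)"
      using assms(3,4) cS by (simp add: divide_right_mono)
  qed
  finally show ?thesis .
qed



lemma one_minus_q:
  fixes K R t :: nat
  assumes "t < K^2"
  shows "1 - min 1 (max 0 (real ((K - R) * K) / real (K^2 - t))) \<le> real R * real K / real (K^2 - t)"
proof -
  have pos: "real (K^2 - t) > 0" using assms by simp
  show ?thesis
  proof (cases "R \<le> K")
    case True
    have e: "real ((K - R) * K) = real K * real K - real R * real K"
      using True by (simp add: of_nat_diff algebra_simps)
    have e2: "real (K^2 - t) = real K * real K - real t"
      using assms by (simp add: of_nat_diff power2_eq_square)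
    have "1 - real ((K - R) * K) / real (K^2 - t) = (real R * real K - real t) / real (K^2 - t)"
      using pos unfolding e by (simp add: field_simps e2)
    also have "\<dots> \<le> real R * real K / real (K^2 - t)"
      using pos by (simp add: divide_right_mono)
    finally have "1 - real ((K - R) * K) / real (K^2 - t) \<le> real R * real K / real (K^2 - t)" .
    moreover have "0 \<le> real R * real K / real (K^2 - t)" using pos by simp
    moreover have "0 \<le> real ((K - R) * K) / real (K^2 - t)" by simp
    ultimately show ?thesis by (auto split: split_min split_max)
  next
    case False
    have "K^2 - t \<le> K * K" by (simp add: power2_eq_square)
    then have "real (K^2 - t) \<le> real K * real K" by (metis of_nat_le_iff of_nat_mult)
    also have "\<dots> \<le> real R * real K" using False by (simp add: mult_right_mono)
    finally have "1 \<le> real R * real K / real (K^2 - t)" using pos by simp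
    moreover have "K - R = 0" using False by simp
    ultimately show ?thesis by simp
  qed
qed

lemma step_bound:
  assumes inv: "minv t s" and t0: "0 < t" and tK: "t < K^2"
  shows "(\<integral>\<^sup>+x. F x \<partial>step K t s) \<le> F s + ennreal (real t / real (K^2 - t))"
proof -
  obtain R C Ct Psi where s: "s = (R, C, Ct, Psi)" by (cases s) auto
  have fin: "finite {d. Psi d \<noteq> 0}" and cd: "card {d. Psi d \<noteq> 0} \<le> t" and ic: "Ct \<le> C"
    using inv s by (auto simp: minv_def st_Psi_def st_C_def st_Ct_def)
  have Fs: "F s = ennreal (real (C - Ct))" by (simp add: s F_def st_C_def st_Ct_def)
  define p where "p = real ((K - R) * K) / real (K^2 - t)"
  define q where "q = min 1 (max 0 p)"
  have q01: "0 \<le> q" "q \<le> 1" by (auto simp: q_def)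
  define NR where "NR = bind_pmf (bernoulli_pmf (real (K - C) / real K)) (\<lambda>newcol.
           if newcol then return_pmf (R + 1, C + 1, Ct + 1, Psi((R + 1, C + 1) := t + 1))
           else map_pmf (\<lambda>z. (R + 1, C, Ct, Psi((R + 1, z) := t + 1))) (pmf_of_set {1..C}))"
  define g where "g = (\<lambda>(U::bool, (x::nat, y::nat)).
            if C < y then (R, C + 1, (if U then Ct + 1 else Ct), Psi((x, C + 1) := t + 1))
            else (R, C, Ct, Psi((x, y) := t + 1)))"
  define OR where "OR = map_pmf g (rejection_sample K R Psi)"
  have st: "step K t s = bind_pmf (bernoulli_pmf p) (\<lambda>nr. if nr then NR else OR)"
    unfolding step_def s NR_def OR_def g_def p_def using t0 tK
    by (simp add: Let_def st_R_def st_C_def st_Ct_def st_Psi_def)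
  have bq: "bernoulli_pmf p = bernoulli_pmf q"
    unfolding q_def by (rule pmf_eqI) (simp add: bernoulli_pmf.rep_eq)
  have hNR: "(\<integral>\<^sup>+x. F x \<partial>NR) = F s"
    unfolding NR_def nn_integral_bind_pmf
    by (rule int_const_pmf) (auto simp: s F_def st_C_def st_Ct_def measure_pmf.emeasure_space_1)
  define h where "h = (\<integral>\<^sup>+w. (if fst w then 0 else 1) \<partial>rejection_sample K R Psi)"
  have hOR: "(\<integral>\<^sup>+x. F x \<partial>OR) \<le> F s + h"
  proof -
    have "(\<integral>\<^sup>+x. F x \<partial>OR) \<le> (\<integral>\<^sup>+w. F s + (if fst w then 0 else 1) \<partial>rejection_sample K R Psi)"
      unfolding OR_def nn_integral_map_pmf
    proof (rule nn_integral_mono)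
      fix w :: "bool \<times> nat \<times> nat"
      obtain U x y where w: "w = (U, x, y)" by (cases w) auto
      show "F (g w) \<le> F s + (if fst w then 0 else 1)"
      proof (cases "C < y \<and> \<not> U")
        case True
        have "F (g w) = ennreal (real (C - Ct) + 1)"
          using True ic by (simp add: w g_def F_def st_C_def st_Ct_def Suc_diff_le)
        also have "\<dots> = F s + 1" by (simp add: Fs ennreal_plus)
        finally show ?thesis using True w by simp
      next
        case False
        then have "F (g w) = F s" using ic
          by (auto simp: w g_def F_def s st_C_def st_Ct_def)
        then show ?thesis by simp
      qed
    qed
    also have "\<dots> = F s + h"
      unfolding h_def by (subst nn_integral_add) (auto simp: measure_pmf.emeasure_space_1)
    finally show ?thesis .
  qed
  have key: "h * ennreal (1 - q) \<le> ennreal (real t / real (K^2 - t))"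
  proof (cases "R = 0")
    case True
    have "K^2 - t \<le> K * K" by (simp add: power2_eq_square)
    then have "real (K^2 - t) \<le> real (K * K)" by (metis of_nat_le_iff)
    then have "1 \<le> p" using tK True by (simp add: p_def)
    then have "q = 1" by (simp add: q_def)
    then show ?thesis by simp
  next
    case False
    have K0: "K > 0" using tK by (cases K) auto
    have h1: "h \<le> ennreal (real t / (real R * real K))"
      unfolding h_def using rs_bound[OF fin cd] False K0 by simp
    have q1: "1 - q \<le> real R * real K / real (K^2 - t)"
      unfolding q_def p_def by (rule one_minus_q[OF tK])
    have "h * ennreal (1 - q) \<le> ennreal (real t / (real R * real K)) * ennreal (1 - q)"
      by (rule mult_right_mono[OF h1]) simp
    also have "\<dots> = ennreal (real t / (real R * real K) * (1 - q))"
      by (rule ennreal_mult[symmetric]) (use q01 in auto)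
    also have "\<dots> \<le> ennreal (real t / (real R * real K) * (real R * real K / real (K^2 - t)))"
      by (rule ennreal_leI, rule mult_left_mono[OF q1]) simp
    also have "\<dots> = ennreal (real t / real (K^2 - t))"
      using False K0 by simp
    finally show ?thesis .
  qed
  have "(\<integral>\<^sup>+x. F x \<partial>step K t s) = F s * ennreal q + (\<integral>\<^sup>+x. F x \<partial>OR) * ennreal (1 - q)"
    unfolding st bq nn_integral_bind_pmf using q01 by (simp add: hNR)
  also have "\<dots> \<le> F s * ennreal q + (F s + h) * ennreal (1 - q)"
    by (intro add_left_mono mult_right_mono hOR) simp
  also have "\<dots> = F s * (ennreal q + ennreal (1 - q)) + h * ennreal (1 - q)"
    by (simp add: algebra_simps)
  also have "ennreal q + ennreal (1 - q) = 1"
    using q01 by (simp flip: ennreal_plus)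
  also have "F s * 1 + h * ennreal (1 - q) \<le> F s + ennreal (real t / real (K^2 - t))"
    using key by (simp add: add_left_mono)
  finally show ?thesis .
qed



definition bnd :: "nat \<Rightarrow> nat \<Rightarrow> real" where
  "bnd K s = (if 0 < s \<and> s < K^2 then real s / real (K^2 - s) else 0)"

lemma bnd_nonneg: "0 \<le> bnd K s" by (simp add: bnd_def)

lemma step_bound': 
  assumes "minv t y"
  shows "(\<integral>\<^sup>+x. F x \<partial>step K t y) \<le> F y + ennreal (bnd K t)"
proof -
  consider "t = 0" | "t \<noteq> 0" "K^2 \<le> t" | "0 < t" "t < K^2" by linarith
  then show ?thesis
  proof cases
    case 1
    then show ?thesis by (simp add: step_def Let_def F_def st_C_def st_Ct_def)
  next
    case 2
    then show ?thesis by (simp add: step_def Let_def bnd_def)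
  next
    case 3
    then show ?thesis using step_bound[OF assms 3] by (simp add: bnd_def)
  qed
qed

lemma proc_bound: "(\<integral>\<^sup>+x. F x \<partial>proc K t) \<le> ennreal (\<Sum>s<t. bnd K s)"
proof (induction t)
  case 0
  then show ?case by (simp add: F_def st_C_def st_Ct_def)
next
  case (Suc t)
  have "(\<integral>\<^sup>+x. F x \<partial>proc K (Suc t)) = (\<integral>\<^sup>+y. (\<integral>\<^sup>+x. F x \<partial>step K t y) \<partial>proc K t)"
    by simp
  also have "\<dots> \<le> (\<integral>\<^sup>+y. F y + ennreal (bnd K t) \<partial>proc K t)"
    by (rule nn_integral_mono_AE) (auto intro!: AE_pmfI step_bound' inv_proc)
  also have "\<dots> = (\<integral>\<^sup>+y. F y \<partial>proc K t) + ennreal (bnd K t)"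
    by (subst nn_integral_add) (auto simp: measure_pmf.emeasure_space_1)
  also have "\<dots> \<le> ennreal (\<Sum>s<t. bnd K s) + ennreal (bnd K t)"
    using Suc.IH by (rule add_right_mono)
  also have "\<dots> = ennreal (\<Sum>s<Suc t. bnd K s)"
    by (simp add: ennreal_plus bnd_nonneg sum_nonneg)
  finally show ?case .
qed

lemma markov:
  assumes "\<epsilon> > 0" "K > 0"
  shows "measure_pmf.prob (proc K t) {s. \<bar>real (st_C s) - real (st_Ct s)\<bar> / real K > \<epsilon>}
          \<le> (\<Sum>s<t. bnd K s) / (\<epsilon> * real K)"
proof -
  define A where "A = {s. \<bar>real (st_C s) - real (st_Ct s)\<bar> / real K > \<epsilon>}"
  define c where "c = 1 / (\<epsilon> * real K)"
  have c0: "c > 0" using assms by (simp add: c_def)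
  have "emeasure (measure_pmf (proc K t)) A = (\<integral>\<^sup>+x. indicator A x \<partial>proc K t)"
    by simp
  also have "\<dots> \<le> (\<integral>\<^sup>+x. ennreal c * F x \<partial>proc K t)"
  proof (rule nn_integral_mono_AE, rule AE_pmfI)
    fix x assume x: "x \<in> set_pmf (proc K t)"
    then have ic: "st_Ct x \<le> st_C x" using inv_proc by (auto simp: minv_def)
    show "indicator A x \<le> ennreal c * F x"
    proof (cases "x \<in> A")
      case True
      then have "real (st_C x - st_Ct x) / real K > \<epsilon>"
        using ic by (simp add: A_def of_nat_diff)
      then have "real (st_C x - st_Ct x) > \<epsilon> * real K"
        using assms by (simp add: field_simps)
      then have "1 \<le> c * real (st_C x - st_Ct x)"
        using assms by (simp add: c_def field_simps)
      then have "1 \<le> ennreal (c * real (st_C x - st_Ct x))"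
        using ennreal_leI by fastforce
      then show ?thesis using True c0 by (simp add: F_def ennreal_mult)
    qed simp
  qed
  also have "\<dots> = ennreal c * (\<integral>\<^sup>+x. F x \<partial>proc K t)"
    by (rule nn_integral_cmult) simp
  also have "\<dots> \<le> ennreal c * ennreal (\<Sum>s<t. bnd K s)"
    by (rule mult_left_mono[OF proc_bound]) simp
  also have "\<dots> = ennreal (c * (\<Sum>s<t. bnd K s))"
    using c0 by (simp add: ennreal_mult sum_nonneg bnd_nonneg)
  finally have "measure_pmf.prob (proc K t) A \<le> c * (\<Sum>s<t. bnd K s)"
    using c0 by (simp add: measure_pmf.emeasure_eq_measure sum_nonneg bnd_nonneg)
  then show ?thesis by (simp add: A_def c_def)
qed



lemma final_bound:
  fixes \<alpha> \<epsilon> :: real and K t :: nat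
  assumes a: "0 < \<alpha>" "\<alpha> < 1/2" and K4: "4 \<le> K" and tb: "real t \<le> real K powr (1 + \<alpha>)" and e: "\<epsilon> > 0"
  shows "measure_pmf.prob (proc K t) {s. \<bar>real (st_C s) - real (st_Ct s)\<bar> / real K > \<epsilon>}
          \<le> 2 / \<epsilon> * real K powr (2 * \<alpha> - 1)"
proof -
  define k where "k = real K"
  define T where "T = real t"
  have k4: "4 \<le> k" using K4 by (simp add: k_def)
  have k0: "0 < k" using k4 by simp
  have "k powr (1 + \<alpha>) \<le> k powr (3/2)"
    using a k4 by (intro powr_mono) auto
  moreover have "k powr (3/2) \<le> k^2 / 2"
  proof -
    have "sqrt 4 \<le> sqrt k" using k4 by (rule real_sqrt_le_mono)
    then have s2: "2 \<le> k powr (1/2)" using k0 by (simp add: powr_half_sqrt)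
    have "k^2 = k powr (3/2 + 1/2)" using k0 by (simp add: powr_numeral)
    also have "\<dots> = k powr (3/2) * k powr (1/2)" by (rule powr_add)
    finally have "k^2 = k powr (3/2) * k powr (1/2)" .
    moreover have "k powr (3/2) * 2 \<le> k powr (3/2) * k powr (1/2)"
      using s2 by (intro mult_left_mono) auto
    ultimately show ?thesis by simp
  qed
  ultimately have Tk: "T \<le> k^2 / 2" using tb by (simp add: k_def T_def)
  have T0: "0 \<le> T" by (simp add: T_def)
  have tK: "t < K^2"
  proof -
    have "0 < k^2" using k0 by simp
    then have "T < k^2" using Tk by linarith
    then have "real t < real (K^2)" by (simp add: T_def k_def)
    then show ?thesis by linarith
  qed
  have den: "real (K^2 - t) = k^2 - T" using tK by (simp add: k_def T_def of_nat_diff)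
  have denpos: "k^2 / 2 \<le> k^2 - T" using Tk by simp
  have k2: "0 < k^2" using k0 by simp
  have each: "bnd K s \<le> T / (k^2 - T)" if "s \<in> {..<t}" for s
  proof (cases "0 < s \<and> s < K^2")
    case True
    have "s < t" using that by simp
    have "real (K^2 - s) = k^2 - real s" using True by (simp add: k_def of_nat_diff)
    moreover have "real s / (k^2 - real s) \<le> T / (k^2 - T)"
      using \<open>s < t\<close> denpos k2 by (intro frac_le) (auto simp: T_def)
    ultimately show ?thesis using True by (simp add: bnd_def)
  next
    case False
    then have "bnd K s = 0" by (simp add: bnd_def)
    moreover have "0 \<le> k^2 - T" using denpos k2 by linarith
    ultimately show ?thesis using T0 by simp
  qed
  have S: "(\<Sum>s<t. bnd K s) \<le> T * (T / (k^2 - T))"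
  proof -
    have "(\<Sum>s<t. bnd K s) \<le> (\<Sum>s<t. T / (k^2 - T))" by (rule sum_mono) (rule each)
    then show ?thesis by (simp add: T_def)
  qed
  have "T / (k^2 - T) \<le> T / (k^2 / 2)"
  proof (rule divide_left_mono)
    have "0 < k^2 - T" using denpos k2 by linarith
    then show "0 < (k^2 - T) * (k^2 / 2)" using k2 by simp
  qed (use denpos T0 in auto)
  then have S2: "(\<Sum>s<t. bnd K s) \<le> T * (T / (k^2 / 2))"
    using S T0 by (meson mult_left_mono order_trans)
  have "measure_pmf.prob (proc K t) {s. \<bar>real (st_C s) - real (st_Ct s)\<bar> / real K > \<epsilon>}
          \<le> (\<Sum>s<t. bnd K s) / (\<epsilon> * k)"
    using markov[OF e, of K t] k0 by (simp add: k_def)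
  also have "\<dots> \<le> T * (T / (k^2 / 2)) / (\<epsilon> * k)"
    using S2 e k0 by (intro divide_right_mono) auto
  also have "\<dots> = 2 / \<epsilon> * (T * T / k powr 3)"
    using k0 e by (simp add: field_simps power2_eq_square powr_numeral power3_eq_cube)
  also have "\<dots> \<le> 2 / \<epsilon> * (k powr (1 + \<alpha>) * k powr (1 + \<alpha>) / k powr 3)"
    using tb T0 e k0 by (intro mult_left_mono divide_right_mono mult_mono) (auto simp: T_def k_def)
  also have "k powr (1 + \<alpha>) * k powr (1 + \<alpha>) / k powr 3 = k powr (2 * \<alpha> - 1)"
  proof -
    have "2 * \<alpha> - 1 = (1 + \<alpha>) + (1 + \<alpha>) - 3" by simp
    then show ?thesis by (simp only: powr_diff powr_add)
  qed
  finally show ?thesis by (simp add: k_def)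
qed



theorem corollary6p4:
  fixes \<alpha> :: real and t :: "nat \<Rightarrow> nat"
  assumes "0 < \<alpha>" and "\<alpha> < 1/2"
    and "\<forall>K\<ge>2. real (t K) \<le> real K powr (1 + \<alpha>)"
  shows "\<forall>\<epsilon>>0. (\<lambda>K. measure_pmf.prob (proc K (t K))
            {s. \<bar>real (st_C s) - real (st_Ct s)\<bar> / real K > \<epsilon>}) \<longlonglongrightarrow> 0"
proof (intro allI impI)
  fix \<epsilon> :: real assume e: "\<epsilon> > 0"
  have h: "(\<lambda>K. 2 / \<epsilon> * real K powr (2 * \<alpha> - 1)) \<longlonglongrightarrow> 0"
    using assms(2) by (intro tendsto_mult_right_zero tendsto_neg_powr filterlim_real_sequentially) auto
  show "(\<lambda>K. measure_pmf.prob (proc K (t K))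
            {s. \<bar>real (st_C s) - real (st_Ct s)\<bar> / real K > \<epsilon>}) \<longlonglongrightarrow> 0"
  proof (rule tendsto_sandwich[OF _ _ tendsto_const h])
    show "\<forall>\<^sub>F K in sequentially. 0 \<le> measure_pmf.prob (proc K (t K))
            {s. \<bar>real (st_C s) - real (st_Ct s)\<bar> / real K > \<epsilon>}" by simp
    show "\<forall>\<^sub>F K in sequentially. measure_pmf.prob (proc K (t K))
            {s. \<bar>real (st_C s) - real (st_Ct s)\<bar> / real K > \<epsilon>} \<le> 2 / \<epsilon> * real K powr (2 * \<alpha> - 1)"
      using eventually_ge_at_top[of "4::nat"]
    proof eventually_elim
      case (elim K)
      then show ?case using final_bound[OF assms(1,2) elim _ e, of "t K"] assms(3) by simp
    qed
  qed
qed

end
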